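(* Assume the network is regular. Let $j^*\in\mathcal E$ and $m'\in\mathcal M$. Then $j^*\leadsto m'$ if and only if there exists a partial child selection $J^\vee:\mathcal M\setminus\{m'\}\to\mathcal E\setminus\{j^*\}$ (injective, with $m\vdash J^\vee(m)$ for all $m\ne m'$) such that the augmented set $\{j^*\}\cup J^\vee(\mathcal M\setminus\{m'\})$ selects an $S$-basis.
   Context: A reaction network consists of a finite set of metabolites $\mathcal M=\{1,\dots,M\}$ and a finite set of reactions $\mathcal E=\{1,\dots,E\}$. Each reaction $j$ has an input stoichiometric vector $y^j\in\mathbb R_{\ge0}^M$ and an output stoichiometric vector $\bar y^j\in\mathbb R_{\ge0}^M$. Write $m\vdash j$ iff $y^j_m\neq 0$. The stoichiometric matrix $S$ is the real $M\times E$ matrix whose $j$-th column is $S^j=\bar y^j-y^j$; it is assumed to have full rank $M$. The rate matrix $R=(r_{jm})$ is the $E\times M$ matrix whose entries $r_{jm}$ with $m\vdash j$ are independent indeterminates, and $r_{jm}=0$ whenever $m\not\vdash j$. "Nonzero algebraically" means nonzero as a polynomial/rational function in these indeterminates. For $\mathcal E'\subseteq\mathcal E$, $S^{\mathcal E'}$ denotes the submatrix of columns indexed by $\mathcal E'$; $\mathcal E'$ selects an $S$-basis if $|\mathcal E'|=M$ and $\det S^{\mathcal E'}\neq0$. A child selection is an injective map $J:\mathcal M\to\mathcal E$ with $m\vdash J(m)$ for all $m$. The network is regular if $\det(SR)\ne0$ algebraically. Let $B=\begin{pmatrix}-\mathrm{id}_{\mathcal E}&R\\ S&0\end{pmatrix}$,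 a square matrix with rows and columns indexed by the disjoint union $\mathcal E\sqcup\mathcal M$; for a regular network it is invertible over the field of rational functions in the $r_{jm}$. For $\alpha\in\mathcal E\sqcup\mathcal M$ set $z^\alpha=-B^{-1}e_\alpha$, and write $\alpha\leadsto\beta$ for $\beta\in\mathcal E\sqcup\mathcal M$ if $z^\alpha_\beta$ is nonzero algebraically. (For $j^*\in\mathcal E$, the $\mathcal M$-part of $z^{j^*}$ is $\delta x^{j^*}=-(SR)^{-1}Se_{j^*}$.) *)

theory Defs
  imports "HOL-Analysis.Analysis"
begin

text \<open>Reaction network: metabolites form a finite type 'm, reactions a finite type 'e.
  y j and ybar j are the input / output stoichiometric vectors of reaction j.\<close>

definition stoich :: "('e::finite \<Rightarrow> real^'m::finite) \<Rightarrow> ('e \<Rightarrow> real^'m) \<Rightarrow> real^'e^'m" where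
  "stoich y ybar = (\<chi> m j. ybar j $ m - y j $ m)"

definition vdash :: "('e::finite \<Rightarrow> real^'m::finite) \<Rightarrow> 'm \<Rightarrow> 'e \<Rightarrow> bool" where
  "vdash y m j \<longleftrightarrow> y j $ m \<noteq> 0"

text \<open>Polynomials / rational functions in the
  indeterminates are identified with the functions of the assignment (R is an infinite field),
  so "nonzero algebraically" becomes "nonzero at some assignment".\<close>

definition rate_matrix :: "('e::finite \<Rightarrow> real^'m::finite) \<Rightarrow> ('e \<Rightarrow> 'm \<Rightarrow> real) \<Rightarrow> real^'m^'e" where
  "rate_matrix y r = (\<chi> j m. if vdash y m j then r j m else 0)"

definition regular_network :: "('e::finite \<Rightarrow> real^'m::finite) \<Rightarrow> ('e \<Rightarrow> real^'m) \<Rightarrow> bool" where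
  "regular_network y ybar \<longleftrightarrow> (\<exists>r. det (stoich y ybar ** rate_matrix y r) \<noteq> 0)"

definition Bmat :: "('e::finite \<Rightarrow> real^'m::finite) \<Rightarrow> ('e \<Rightarrow> real^'m) \<Rightarrow> ('e \<Rightarrow> 'm \<Rightarrow> real)
    \<Rightarrow> real^('e + 'm)^('e + 'm)" where
  "Bmat y ybar r = (\<chi> a b. (case a of
       Inl j \<Rightarrow> (case b of Inl j' \<Rightarrow> (if j = j' then -1 else 0) | Inr m \<Rightarrow> rate_matrix y r $ j $ m)
     | Inr m \<Rightarrow> (case b of Inl j \<Rightarrow> stoich y ybar $ m $ j | Inr m' \<Rightarrow> 0)))"

definition zvec :: "('e::finite \<Rightarrow> real^'m::finite) \<Rightarrow> ('e \<Rightarrow> real^'m) \<Rightarrow> ('e \<Rightarrow> 'm \<Rightarrow> real)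
    \<Rightarrow> ('e + 'm) \<Rightarrow> real^('e + 'm)" where
  "zvec y ybar r \<alpha> = - (matrix_inv (Bmat y ybar r) *v axis \<alpha> 1)"

text \<open>alpha ~> beta: the rational function z^alpha_beta is nonzero, i.e. at some assignment
  where B is invertible its value is nonzero.\<close>
definition leadsto :: "('e::finite \<Rightarrow> real^'m::finite) \<Rightarrow> ('e \<Rightarrow> real^'m) \<Rightarrow> ('e + 'm) \<Rightarrow> ('e + 'm) \<Rightarrow> bool" where
  "leadsto y ybar \<alpha> \<beta> \<longleftrightarrow>
     (\<exists>r. invertible (Bmat y ybar r) \<and> zvec y ybar r \<alpha> $ \<beta> \<noteq> 0)"

definition selects_S_basis :: "real^'e::finite^'m::finite \<Rightarrow> 'e set \<Rightarrow> bool" where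
  "selects_S_basis S E' \<longleftrightarrow> card E' = CARD('m) \<and>
     (\<exists>f :: 'm \<Rightarrow> 'e. bij_betw f UNIV E' \<and> det (\<chi> i k. S $ i $ f k) \<noteq> 0)"

end

theory Submission
  imports Defs "HOL-Computational_Algebra.Polynomial"
begin

lemma sum_UNIV_Plus:
  fixes f :: "('a::finite + 'b::finite) \<Rightarrow> 'c::comm_monoid_add"
  shows "sum f UNIV = (\<Sum>a\<in>UNIV. f (Inl a)) + (\<Sum>b\<in>UNIV. f (Inr b))"
proof -
  have "sum f UNIV = sum f (Inl ` UNIV) + sum f (Inr ` UNIV)"
    by (subst UNIV_sum, rule sum.union_disjoint) auto
  also have "\<dots> = (\<Sum>a\<in>UNIV. f (Inl a)) + (\<Sum>b\<in>UNIV. f (Inr b))"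
    by (simp add: sum.reindex)
  finally show ?thesis .
qed

lemma Bmv_Inl:
  "(Bmat y ybar r *v z) $ Inl j = - z $ Inl j + (\<Sum>m\<in>UNIV. rate_matrix y r $ j $ m * z $ Inr m)"
proof -
  have "\<And>a. (if j = a then -1 else 0) * z $ Inl a = (if j = a then - z $ Inl a else (0::real))"
    by simp
  then show ?thesis
  unfolding matrix_vector_mult_def Bmat_def
  by (simp add: sum_UNIV_Plus)
qed

lemma Bmv_Inr:
  "(Bmat y ybar r *v z) $ Inr m = (\<Sum>j\<in>UNIV. stoich y ybar $ m $ j * z $ Inl j)"
  unfolding matrix_vector_mult_def Bmat_def
  by (simp add: sum_UNIV_Plus)

lemma det_affine:
  fixes M :: "real \<Rightarrow> real^'n::finite^'n"
  assumes "\<And>t i k. M t $ i $ k = a i k + t * b i k"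
  shows "\<exists>p. \<forall>t. det (M t) = poly p t"
proof -
  define p where "p = (\<Sum>\<pi>\<in>{\<pi>. \<pi> permutes (UNIV::'n set)}.
      smult (of_int (sign \<pi>)) (\<Prod>i\<in>UNIV. [:a i (\<pi> i), b i (\<pi> i):]))"
  have "det (M t) = poly p t" for t
    unfolding det_def p_def poly_sum poly_prod
    by (simp add: assms algebra_simps poly_prod)
  then show ?thesis by blast
qed

lemma inv_iff_ker:
  fixes A :: "real^'n::finite^'n"
  shows "invertible A \<longleftrightarrow> (\<forall>x. A *v x = 0 \<longrightarrow> x = 0)"
  using invertible_left_inverse matrix_left_invertible_ker by blast

lemma B_inv:
  "invertible (Bmat y ybar r) \<longleftrightarrow> det (stoich y ybar ** rate_matrix y r) \<noteq> 0"
proof -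
  let ?S = "stoich y ybar" and ?R = "rate_matrix y r" and ?B = "Bmat y ybar r"
  have "(\<forall>z. ?B *v z = 0 \<longrightarrow> z = 0) \<longleftrightarrow> (\<forall>x. (?S ** ?R) *v x = 0 \<longrightarrow> x = 0)"
  proof
    assume H: "\<forall>z. ?B *v z = 0 \<longrightarrow> z = 0"
    show "\<forall>x. (?S ** ?R) *v x = 0 \<longrightarrow> x = 0"
    proof (intro allI impI)
      fix x assume x: "(?S ** ?R) *v x = 0"
      define z where "z = (\<chi> a. case a of Inl j \<Rightarrow> (?R *v x) $ j | Inr m \<Rightarrow> x $ m)"
      have "?B *v z = 0"
      proof (subst vec_eq_iff, rule allI)
        fix a show "(?B *v z) $ a = 0 $ a"
        proof (cases a)
          case (Inl j) then show ?thesis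
            by (simp only: Bmv_Inl) (simp add: z_def matrix_vector_mult_def)
        next
          case (Inr m)
          have "(?S *v (?R *v x)) $ m = 0" using x by (simp add: matrix_vector_mul_assoc)
          then show ?thesis using Inr
            by (simp only: Bmv_Inr) (simp add: z_def matrix_vector_mult_def)
        qed
      qed
      then have z0: "z = 0" using H by blast
      show "x = 0"
      proof (subst vec_eq_iff, rule allI)
        fix m have "z $ Inr m = 0" using z0 by simp
        then show "x $ m = 0 $ m" by (simp add: z_def)
      qed
    qed
  next
    assume H: "\<forall>x. (?S ** ?R) *v x = 0 \<longrightarrow> x = 0"
    show "\<forall>z. ?B *v z = 0 \<longrightarrow> z = 0"
    proof (intro allI impI)
      fix z assume z: "?B *v z = 0"
      define x where "x = (\<chi> m. z $ Inr m)"
      define u where "u = (\<chi> j. z $ Inl j)"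
      have u: "u = ?R *v x"
      proof (subst vec_eq_iff, rule allI)
        fix j
        have "(?B *v z) $ Inl j = 0" using z by simp
        then have "- z $ Inl j + (\<Sum>m\<in>UNIV. ?R $ j $ m * z $ Inr m) = 0"
          by (simp only: Bmv_Inl)
        then show "u $ j = (?R *v x) $ j"
          by (simp add: Bmv_Inl u_def x_def matrix_vector_mult_def)
      qed
      have "?S *v u = 0"
      proof (subst vec_eq_iff, rule allI)
        fix m
        have "(?B *v z) $ Inr m = 0" using z by simp
        then have "(\<Sum>j\<in>UNIV. ?S $ m $ j * z $ Inl j) = 0"
          by (simp only: Bmv_Inr)
        then show "(?S *v u) $ m = 0 $ m"
          by (simp add: Bmv_Inr u_def matrix_vector_mult_def)
      qed
      then have "(?S ** ?R) *v x = 0" using u by (simp add: matrix_vector_mul_assoc)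
      then have "x = 0" using H by blast
      then have "u = 0" using u by simp
      show "z = 0"
      proof (subst vec_eq_iff, rule allI)
        fix a show "z $ a = 0 $ a"
          using \<open>x = 0\<close> \<open>u = 0\<close>
          by (cases a) (auto simp: vec_eq_iff x_def u_def)
      qed
    qed
  qed
  then show ?thesis by (simp add: inv_iff_ker invertible_det_nz[symmetric])
qed

lemma zvec_eq:
  assumes "invertible (Bmat y ybar r)"
  shows "(stoich y ybar ** rate_matrix y r) *v (\<chi> m. zvec y ybar r (Inl js) $ Inr m)
           = (\<chi> i. - stoich y ybar $ i $ js)"
proof -
  let ?S = "stoich y ybar" and ?R = "rate_matrix y r" and ?B = "Bmat y ybar r"
  define z where "z = zvec y ybar r (Inl js)"
  have "?B ** matrix_inv ?B = mat 1"
    using assms unfolding invertible_def matrix_inv_def by (rule someI2_ex) auto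
  then have e: "?B *v (matrix_inv ?B *v axis (Inl js) 1) = axis (Inl js) 1"
    by (simp add: matrix_vector_mul_assoc)
  have neg: "\<And>w. ?B *v (- w) = - (?B *v w)"
    by (simp add: vec_eq_iff matrix_vector_mult_def sum_negf)
  have Bz: "?B *v z = - axis (Inl js) 1"
    unfolding z_def zvec_def neg e ..
  define x where "x = (\<chi> m. z $ Inr m)"
  define u where "u = (\<chi> j. z $ Inl j)"
  have u: "u = ?R *v x + axis js 1"
  proof (subst vec_eq_iff, rule allI)
    fix j
    note Bz[unfolded vec_eq_iff, rule_format, of "Inl j", unfolded Bmv_Inl]
    then show "u $ j = (?R *v x + axis js 1) $ j"
      by (auto simp add: Bmv_Inl u_def x_def matrix_vector_mult_def axis_def)
  qed
  have "?S *v u = 0"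
  proof (subst vec_eq_iff, rule allI)
    fix m
    note Bz[unfolded vec_eq_iff, rule_format, of "Inr m", unfolded Bmv_Inr]
    then show "(?S *v u) $ m = 0 $ m"
      by (simp add: Bmv_Inr u_def matrix_vector_mult_def axis_def)
  qed
  then have "(?S ** ?R) *v x + ?S *v axis js 1 = 0"
    using u by (simp add: matrix_vector_mul_assoc matrix_vector_right_distrib)
  then have "(?S ** ?R) *v x = - (?S *v axis js 1)"
    by (simp add: eq_neg_iff_add_eq_0)
  also have "\<dots> = (\<chi> i. - ?S $ i $ js)"
    by (simp add: vec_eq_iff matrix_vector_mult_def axis_def if_distrib cong: if_cong)
  finally show ?thesis unfolding x_def z_def .
qed

lemma det_col_expand:
  fixes S :: "real^'e::finite^'m::finite" and c :: "'e \<Rightarrow> 'm \<Rightarrow> real"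
  shows "det (\<chi> i k. \<Sum>j\<in>UNIV. S$i$j * c j k)
       = (\<Sum>f\<in>UNIV. (\<Prod>k\<in>UNIV. c (f k) k) * det (\<chi> i k. S$i$(f k)))"
proof -
  let ?A = "(\<chi> i k. \<Sum>j\<in>UNIV. S$i$j * c j k) :: real^'m^'m"
  have "det ?A = det (transpose ?A)" by simp
  also have "\<dots> = (\<Sum>p | p permutes (UNIV::'m set). of_int (sign p) *
       (\<Prod>k\<in>UNIV. \<Sum>j\<in>UNIV. c j k * S$(p k)$j))"
    by (simp add: det_def transpose_def mult.commute)
  also have "\<dots> = (\<Sum>p | p permutes (UNIV::'m set). of_int (sign p) *
       (\<Sum>f\<in>UNIV. \<Prod>k\<in>UNIV. c (f k) k * S$(p k)$(f k)))"
    by (simp add: prod_sum_PiE[of "UNIV::'m set" "\<lambda>_. UNIV::'e set", simplified])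
  also have "\<dots> = (\<Sum>p | p permutes (UNIV::'m set). \<Sum>f\<in>UNIV. 
       (\<Prod>k\<in>UNIV. c (f k) k) * (of_int (sign p) * (\<Prod>k\<in>UNIV. S$(p k)$(f k))))"
    by (simp add: sum_distrib_left prod.distrib mult.assoc mult.left_commute)
  also have "\<dots> = (\<Sum>f\<in>UNIV. \<Sum>p | p permutes (UNIV::'m set).
       (\<Prod>k\<in>UNIV. c (f k) k) * (of_int (sign p) * (\<Prod>k\<in>UNIV. S$(p k)$(f k))))"
    by (rule sum.swap)
  also have "\<dots> = (\<Sum>f\<in>UNIV. (\<Prod>k\<in>UNIV. c (f k) k) * det ((\<chi> k i. S$i$(f k)) :: real^'m^'m))"
    by (simp add: det_def sum_distrib_left)
  also have "\<dots> = (\<Sum>f\<in>UNIV. (\<Prod>k\<in>UNIV. c (f k) k) * det (\<chi> i k. S$i$(f k)))"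
  proof -
    have "\<And>f. (\<chi> k i. S$i$(f k)) = transpose ((\<chi> i k. S$i$(f k)) :: real^'m^'m)"
      by (simp add: vec_eq_iff transpose_def)
    then show ?thesis by simp
  qed
  finally show ?thesis .
qed

theorem theorem2p3:
  fixes y ybar :: "'e::finite \<Rightarrow> real^'m::finite"
    and jstar :: 'e and m' :: 'm
  assumes "\<And>j m. y j $ m \<ge> 0"
    and "\<And>j m. ybar j $ m \<ge> 0"
    and "rank (stoich y ybar) = CARD('m)"
    and "regular_network y ybar"
  shows "leadsto y ybar (Inl jstar) (Inr m') \<longleftrightarrow>
    (\<exists>J :: 'm \<Rightarrow> 'e. inj_on J (UNIV - {m'}) \<and>
       (\<forall>m. m \<noteq> m' \<longrightarrow> J m \<noteq> jstar \<and> vdash y m (J m)) \<and>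
       selects_S_basis (stoich y ybar) (insert jstar (J ` (UNIV - {m'}))))"
proof -
  define S where "S = stoich y ybar"
  define R where "R = rate_matrix y"
  define Arep where "Arep r = (\<chi> i k. if k = m' then - S$i$jstar else (S ** R r)$i$k)" for r
  define c where "c r j k = (if k = m' then (if j = jstar then -1 else 0) else R r $ j $ k)" for r j k
  have Arep_exp: "det (Arep r) = (\<Sum>f\<in>UNIV. (\<Prod>k\<in>UNIV. c r (f k) k) * det (\<chi> i k. S$i$(f k)))" for r
  proof -
    have h: "\<And>i j. S$i$j * (if j = jstar then -1 else 0) = (if j = jstar then - S$i$j else 0)"
      by simp
    have "Arep r = (\<chi> i k. \<Sum>j\<in>UNIV. S$i$j * c r j k)"
      by (simp add: vec_eq_iff Arep_def c_def matrix_matrix_mult_def h)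
    then show ?thesis using det_col_expand by simp
  qed
  have key: "leadsto y ybar (Inl jstar) (Inr m') \<longleftrightarrow> (\<exists>r. det (S ** R r) \<noteq> 0 \<and> det (Arep r) \<noteq> 0)"
  proof -
    have cr: "det (Arep r) = zvec y ybar r (Inl jstar) $ Inr m' * det (S ** R r)"
      if "invertible (Bmat y ybar r)" for r
    proof -
      define x where "x = (\<chi> m. zvec y ybar r (Inl jstar) $ Inr m)"
      have "(S ** R r) *v x = (\<chi> i. - S $ i $ jstar)"
        using zvec_eq[OF that] unfolding x_def S_def R_def .
      then have "Arep r = (\<chi> i j. if j = m' then ((S ** R r) *v x)$i else (S ** R r)$i$j)"
        by (simp add: Arep_def vec_eq_iff)
      then have "det (Arep r) = x $ m' * det (S ** R r)"
        using cramer_lemma by simp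
      then show ?thesis by (simp add: x_def)
    qed
    show ?thesis
    proof
      assume "leadsto y ybar (Inl jstar) (Inr m')"
      then obtain r where r: "invertible (Bmat y ybar r)" "zvec y ybar r (Inl jstar) $ Inr m' \<noteq> 0"
        unfolding leadsto_def by blast
      have "det (S ** R r) \<noteq> 0" using r(1) B_inv unfolding S_def R_def by blast
      then show "\<exists>r. det (S ** R r) \<noteq> 0 \<and> det (Arep r) \<noteq> 0"
        using cr[OF r(1)] r(2) by auto
    next
      assume "\<exists>r. det (S ** R r) \<noteq> 0 \<and> det (Arep r) \<noteq> 0"
      then obtain r where r: "det (S ** R r) \<noteq> 0" "det (Arep r) \<noteq> 0" by blast
      have inv: "invertible (Bmat y ybar r)" using r(1) B_inv unfolding S_def R_def by blast
      show "leadsto y ybar (Inl jstar) (Inr m')"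
        unfolding leadsto_def using inv cr[OF inv] r(2) by auto
    qed
  qed
  show ?thesis
  proof
    assume "leadsto y ybar (Inl jstar) (Inr m')"
    then obtain r where r: "det (S ** R r) \<noteq> 0" "det (Arep r) \<noteq> 0" using key by blast
    then have "(\<Sum>f\<in>UNIV. (\<Prod>k\<in>UNIV. c r (f k) k) * det (\<chi> i k. S$i$(f k))) \<noteq> 0"
      using Arep_exp by simp
    then obtain f :: "'m \<Rightarrow> 'e" where f: "(\<Prod>k\<in>UNIV. c r (f k) k) * det (\<chi> i k. S$i$(f k)) \<noteq> 0"
      by (meson sum.neutral)
    have cf: "c r (f k) k \<noteq> 0" for k using f by auto
    have df: "det ((\<chi> i k. S$i$(f k)) :: real^'m^'m) \<noteq> 0" using f by auto
    have injf: "inj f"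
    proof (rule injI, rule ccontr)
      fix a b assume "f a = f b" "a \<noteq> b"
      then have "column a ((\<chi> i k. S$i$(f k)) :: real^'m^'m) = column b (\<chi> i k. S$i$(f k))"
        by (simp add: column_def vec_eq_iff)
      then have "det ((\<chi> i k. S$i$(f k)) :: real^'m^'m) = 0"
        using det_identical_columns \<open>a \<noteq> b\<close> by blast
      then show False using df by simp
    qed
    have fm': "f m' = jstar" using cf[of m'] by (auto simp: c_def split: if_splits)
    have vd: "vdash y k (f k)" if "k \<noteq> m'" for k
      using cf[of k] that by (auto simp: c_def R_def rate_matrix_def split: if_splits)
    have rng: "insert jstar (f ` (UNIV - {m'})) = range f"
      using fm' by auto
    show "\<exists>J :: 'm \<Rightarrow> 'e. inj_on J (UNIV - {m'}) \<and>
       (\<forall>m. m \<noteq> m' \<longrightarrow> J m \<noteq> jstar \<and> vdash y m (J m)) \<and>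
       selects_S_basis (stoich y ybar) (insert jstar (J ` (UNIV - {m'})))"
    proof (intro exI conjI allI impI)
      show "inj_on f (UNIV - {m'})" using injf by (simp add: inj_on_def)
      show "f m \<noteq> jstar" if "m \<noteq> m'" for m using injf fm' that by (metis injD)
      show "vdash y m (f m)" if "m \<noteq> m'" for m using vd that by blast
      show "selects_S_basis (stoich y ybar) (insert jstar (f ` (UNIV - {m'})))"
        unfolding rng selects_S_basis_def S_def[symmetric]
        using df injf by (auto simp: card_image intro!: exI[of _ f] inj_on_imp_bij_betw)
    qed
  next
    assume "\<exists>J :: 'm \<Rightarrow> 'e. inj_on J (UNIV - {m'}) \<and>
       (\<forall>m. m \<noteq> m' \<longrightarrow> J m \<noteq> jstar \<and> vdash y m (J m)) \<and>
       selects_S_basis (stoich y ybar) (insert jstar (J ` (UNIV - {m'})))"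
    then obtain J :: "'m \<Rightarrow> 'e" where J: "inj_on J (UNIV - {m'})"
      "\<And>m. m \<noteq> m' \<Longrightarrow> J m \<noteq> jstar" "\<And>m. m \<noteq> m' \<Longrightarrow> vdash y m (J m)"
      "selects_S_basis S (insert jstar (J ` (UNIV - {m'})))"
      unfolding S_def by blast
    define E' where "E' = insert jstar (J ` (UNIV - {m'}))"
    define f where "f = J(m' := jstar)"
    have rngf: "range f = E'" unfolding f_def E'_def by auto
    have injf: "inj f"
      unfolding f_def inj_def using J(1,2) by (auto simp: inj_on_def)
    obtain g where g: "bij_betw g UNIV E'" "det ((\<chi> i k. S $ i $ g k) :: real^'m^'m) \<noteq> 0"
      using J(4) unfolding selects_S_basis_def E'_def by blast
    define p where "p = inv_into UNIV g \<circ> f"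
    have gp: "g (p k) = f k" for k
      unfolding p_def using g(1) rngf by (auto simp: bij_betw_def f_inv_into_f)
    have injp: "inj p"
    proof (rule injI)
      fix a b assume "p a = p b"
      then have "f a = f b" using gp by metis
      then show "a = b" using injf by (simp add: inj_eq)
    qed
    have pp: "p permutes UNIV"
      using injp by (intro inj_imp_permutes) auto
    have "det ((\<chi> i k. S$i$(f k)) :: real^'m^'m)
        = det ((\<chi> i k. ((\<chi> i k. S $ i $ g k) :: real^'m^'m) $ i $ p k) :: real^'m^'m)"
      by (simp add: gp)
    also have "\<dots> = of_int (sign p) * det ((\<chi> i k. S $ i $ g k) :: real^'m^'m)"
      by (rule det_permute_columns[OF pp])
    finally have df: "det ((\<chi> i k. S$i$(f k)) :: real^'m^'m) \<noteq> 0"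
      using g(2) by simp
    define r1 where "r1 = (\<lambda>(j::'e) (k::'m). if j = J k then 1 else (0::real))"
    have cprod: "(\<Prod>k\<in>UNIV. c r1 (h k) k) = (if h = f then -1 else 0)" for h
    proof (cases "h = f")
      case True
      have "(\<Prod>k\<in>UNIV. c r1 (h k) k) = (\<Prod>k\<in>UNIV. if k = m' then -1 else 1)"
        using J(3) True by (intro prod.cong) (auto simp: c_def f_def R_def rate_matrix_def r1_def)
      also have "\<dots> = -1" by (simp add: prod.delta)
      finally show ?thesis using True by simp
    next
      case False
      then obtain k where k: "h k \<noteq> f k" by auto
      have "c r1 (h k) k = 0"
        using k by (auto simp: c_def f_def R_def rate_matrix_def r1_def split: if_splits)
      then have "(\<Prod>k\<in>UNIV. c r1 (h k) k) = 0"
        by (meson UNIV_I finite prod_zero)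
      then show ?thesis using False by simp
    qed
    have d1: "det (Arep r1) \<noteq> 0"
    proof -
      have "det (Arep r1) = (\<Sum>h\<in>UNIV. (if h = f then - det ((\<chi> i k. S$i$(h k)) :: real^'m^'m) else 0))"
        unfolding Arep_exp cprod by (intro sum.cong) auto
      also have "\<dots> = - det ((\<chi> i k. S$i$(f k)) :: real^'m^'m)"
        by (simp add: sum.delta')
      finally show ?thesis using df by simp
    qed
    obtain r0 where d0: "det (S ** R r0) \<noteq> 0"
      using assms(4) unfolding regular_network_def S_def R_def by blast
    define rt where "rt t = (\<lambda>j k. r0 j k + t * (r1 j k - r0 j k))" for t :: real
    have hR: "R (rt t) $ j $ k = R r0 $ j $ k + t * (R r1 $ j $ k - R r0 $ j $ k)" for t j k
      by (simp add: R_def rate_matrix_def rt_def)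
    have hSR: "(S ** R (rt t)) $ i $ k = (S ** R r0) $ i $ k + t * ((S ** R r1) $ i $ k - (S ** R r0) $ i $ k)"
      for t i k
      by (simp add: matrix_matrix_mult_def hR algebra_simps sum.distrib sum_distrib_left sum_subtractf)
    have hA: "Arep (rt t) $ i $ k = Arep r0 $ i $ k + t * (Arep r1 $ i $ k - Arep r0 $ i $ k)"
      for t i k
      by (simp add: Arep_def hSR)
    obtain P where P: "\<And>t. det (S ** R (rt t)) = poly P t"
      using det_affine[of "\<lambda>t. S ** R (rt t)", OF hSR] by blast
    obtain Q where Q: "\<And>t. det (Arep (rt t)) = poly Q t"
      using det_affine[of "\<lambda>t. Arep (rt t)", OF hA] by blast
    have rt0: "rt 0 = r0" and rt1: "rt 1 = r1" by (auto simp: rt_def)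
    have "P \<noteq> 0" using P[of 0] d0 rt0 by auto
    moreover have "Q \<noteq> 0" using Q[of 1] d1 rt1 by auto
    ultimately have "P * Q \<noteq> 0" by simp
    then have "finite {t. poly (P * Q) t = 0}" by (rule poly_roots_finite)
    then obtain t where "t \<notin> {t. poly (P * Q) t = 0}"
      using ex_new_if_finite[OF infinite_UNIV_char_0] by blast
    then have "det (S ** R (rt t)) \<noteq> 0 \<and> det (Arep (rt t)) \<noteq> 0"
      by (simp add: P Q)
    then show "leadsto y ybar (Inl jstar) (Inr m')" using key by blast
  qed
qed

end
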